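(* Let $G\cong A_n$ with $n\ge 5$. Then either $G\cong A_5$ or $o(G)\ge 3.55$.
   Context: For a finite group $G$, $\psi(G)=\sum_{x\in G}|x|$ where $|x|$ is the order of $x$, and $o(G)=\psi(G)/|G|$. $A_n$ is the alternating group of degree $n$. *)

theory Defs
  imports "HOL-Algebra.Algebra"
begin

definition psi :: "('a, 'b) monoid_scheme \<Rightarrow> nat" where
  "psi G = (\<Sum>x\<in>carrier G. group.ord G x)"

definition avg_ord :: "('a, 'b) monoid_scheme \<Rightarrow> real" where
  "avg_ord G = real (psi G) / real (order G)"

end

theory Submission
  imports Defs
begin

definition cl :: "('a \<Rightarrow> 'a) \<Rightarrow> 'a \<Rightarrow> nat" where
  "cl p x = (LEAST k. 0 < k \<and> (p ^^ k) x = x)"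

definition PB :: "'a set \<Rightarrow> bool \<Rightarrow> ('a \<Rightarrow> 'a) set" where
  "PB S b = {p. p permutes S \<and> evenperm p = b}"

lemma cl_ex:
  assumes "finite S" "p permutes S"
  shows "\<exists>k. 0 < k \<and> (p ^^ k) x = x"
proof -
  have "permutation p" using assms permutation_permutes by blast
  then obtain n where "n > 0" "(p ^^ n) x = x" by (rule permutation_self)
  then show ?thesis by blast
qed

lemma cl_props:
  assumes "finite S" "p permutes S"
  shows "0 < cl p x" "(p ^^ cl p x) x = x" "\<And>k. 0 < k \<Longrightarrow> k < cl p x \<Longrightarrow> (p ^^ k) x \<noteq> x"
proof -
  from cl_ex[OF assms, of x] have e: "\<exists>k. 0 < k \<and> (p ^^ k) x = x" .
  from LeastI_ex[OF e] show "0 < cl p x" "(p ^^ cl p x) x = x" unfolding cl_def by auto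
  show "\<And>k. 0 < k \<Longrightarrow> k < cl p x \<Longrightarrow> (p ^^ k) x \<noteq> x"
    unfolding cl_def using not_less_Least by blast
qed

lemma cl_le:
  assumes "0 < k" "(p ^^ k) x = x" shows "cl p x \<le> k"
  unfolding cl_def using assms by (auto intro: Least_le)

lemma cl_fix: "p x = x \<Longrightarrow> cl p x = 1"
  unfolding cl_def by (rule Least_equality) auto

lemma funpow_fix: "q x = x \<Longrightarrow> (q ^^ n) x = x"
  by (induct n) auto

lemma cl_shift:
  assumes S: "finite S" and q: "q permutes S" and qx: "q x = x" and ax: "a \<noteq> x"
  shows "cl (Transposition.transpose x a \<circ> q) x = Suc (cl q a)"
proof -
  define p where "p = Transposition.transpose x a \<circ> q"
  define L where "L = cl q a"
  note cq = cl_props[OF S q, where x=a, folded L_def]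
  have injq: "inj (q ^^ n)" for n using permutes_inj[OF q] by simp
  have qnx: "(q ^^ n) a \<noteq> x" for n
  proof
    assume "(q ^^ n) a = x"
    then have "(q ^^ n) a = (q ^^ n) x" using funpow_fix[of q x, OF qx] by simp
    then show False using injq[of n] ax by (auto dest: injD)
  qed
  have c1: "j < L \<Longrightarrow> (p ^^ j) a = (q ^^ j) a" for j
  proof (induct j)
    case 0 then show ?case by simp
  next
    case (Suc j)
    then have "(p ^^ Suc j) a = p ((q ^^ j) a)" by simp
    also have "\<dots> = Transposition.transpose x a ((q ^^ Suc j) a)" by (simp add: p_def)
    also have "\<dots> = (q ^^ Suc j) a"
      using cq(3)[of "Suc j"] Suc.prems qnx[of "Suc j"] by (simp add: transpose_apply_other)
    finally show ?case .
  qed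
  have c2: "(p ^^ L) a = x"
  proof -
    obtain L' where L': "L = Suc L'" using cq(1) by (cases L) auto
    have "(p ^^ L) a = p ((q ^^ L') a)" using c1[of L'] L' by simp
    also have "\<dots> = Transposition.transpose x a ((q ^^ L) a)" by (simp add: p_def L')
    also have "\<dots> = x" using cq(2) by simp
    finally show ?thesis .
  qed
  have px: "p x = a" by (simp add: p_def qx)
  have pS: "(p ^^ Suc i) x = (p ^^ i) a" for i by (simp add: funpow_Suc_right px del: funpow.simps)
  have "cl p x = Suc L"
    unfolding cl_def
  proof (rule Least_equality)
    show "0 < Suc L \<and> (p ^^ Suc L) x = x" using pS c2 by simp
  next
    fix y assume y: "0 < y \<and> (p ^^ y) x = x"
    show "Suc L \<le> y"
    proof (rule ccontr)
      assume "\<not> Suc L \<le> y"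
      then obtain i where i: "y = Suc i" "i < L" using y by (cases y) auto
      then have "(p ^^ y) x = (q ^^ i) a" using pS c1 by simp
      then show False using y qnx[of i] by simp
    qed
  qed
  then show ?thesis by (simp add: p_def L_def)
qed


lemma finite_PB: "finite S \<Longrightarrow> finite (PB S b)"
  unfolding PB_def by (rule finite_subset[OF _ finite_permutations]) auto

lemma permutes_fix_iff:
  assumes "x \<in> S"
  shows "(p permutes S \<and> p x = x) \<longleftrightarrow> p permutes (S - {x})"
proof
  assume h: "p permutes S \<and> p x = x"
  show "p permutes (S - {x})"
    unfolding permutes_def
  proof (intro conjI allI impI)
    fix y assume "y \<notin> S - {x}"
    then show "p y = y" using h permutes_not_in by (cases "y = x") auto
  next
    fix y show "\<exists>!z. p z = y" using h unfolding permutes_def by blast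
  qed
next
  assume h: "p permutes (S - {x})"
  then have "p x = x" using permutes_not_in by fastforce
  moreover have "p permutes S" using h permutes_subset by blast
  ultimately show "p permutes S \<and> p x = x" by blast
qed

lemma PB_fix:
  assumes "x \<in> S" shows "{p \<in> PB S b. p x = x} = PB (S - {x}) b"
proof (rule Set.set_eqI)
  fix p
  have "(p permutes S \<and> p x = x) = (p permutes (S - {x}))" by (rule permutes_fix_iff[OF assms])
  then show "p \<in> {p \<in> PB S b. p x = x} \<longleftrightarrow> p \<in> PB (S - {x}) b"
    unfolding PB_def by auto
qed

lemma PB_move:
  assumes S: "finite S" and x: "x \<in> S" and a: "a \<in> S" "a \<noteq> x"
  shows "{p \<in> PB S b. p x = a} = (\<lambda>q. Transposition.transpose x a \<circ> q) ` PB (S - {x}) (\<not> b)"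
proof (rule Set.set_eqI, rule iffI)
  have t: "Transposition.transpose x a permutes S" using x a(1) by (rule permutes_swap_id)
  have evt: "\<not> evenperm (Transposition.transpose x a)" using evenperm_swap[of x a] a(2) by simp
  fix p assume "p \<in> {p \<in> PB S b. p x = a}"
  then have p: "p permutes S" "evenperm p = b" "p x = a" unfolding PB_def by auto
  define q where "q = Transposition.transpose x a \<circ> p"
  have qS: "q permutes S" unfolding q_def using permutes_compose[OF p(1) t] .
  have qx: "q x = x" using p(3) by (simp add: q_def)
  have qS': "q permutes (S - {x})" using permutes_fix_iff[OF x, of q] qS qx by simp
  have "evenperm q = (evenperm (Transposition.transpose x a) = evenperm p)"
    unfolding q_def by (rule evenperm_comp[OF permutation_swap_id permutes_imp_permutation[OF S p(1)]])
  then have evq: "evenperm q = (\<not> b)" using evt p(2) by simp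
  have pq: "p = Transposition.transpose x a \<circ> q" unfolding q_def by (simp add: o_assoc)
  have qin: "q \<in> PB (S - {x}) (\<not> b)" unfolding PB_def using qS' evq by simp
  show "p \<in> (\<lambda>q. Transposition.transpose x a \<circ> q) ` PB (S - {x}) (\<not> b)"
    by (rule image_eqI[where x=q]) (use pq qin in simp_all)
next
  have t: "Transposition.transpose x a permutes S" using x a(1) by (rule permutes_swap_id)
  have evt: "\<not> evenperm (Transposition.transpose x a)" using evenperm_swap[of x a] a(2) by simp
  fix p assume "p \<in> (\<lambda>q. Transposition.transpose x a \<circ> q) ` PB (S - {x}) (\<not> b)"
  then obtain q where qPB: "q \<in> PB (S - {x}) (\<not> b)" and pq: "p = Transposition.transpose x a \<circ> q"
    by (rule imageE)
  from qPB have q: "q permutes (S - {x})" "evenperm q = (\<not> b)" unfolding PB_def by auto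
  have qS: "q permutes S" "q x = x" using permutes_fix_iff[OF x, of q] q(1) by simp_all
  have pS: "p permutes S" unfolding pq using permutes_compose[OF qS(1) t] .
  have "evenperm p = (evenperm (Transposition.transpose x a) = evenperm q)"
    unfolding pq by (rule evenperm_comp[OF permutation_swap_id permutes_imp_permutation[OF S qS(1)]])
  then have evp: "evenperm p = b" using evt q(2) by simp
  have px: "p x = a" using qS(2) pq by simp
  show "p \<in> {p \<in> PB S b. p x = a}" unfolding PB_def using pS evp px by simp
qed

lemma inj_transpose_comp: "inj_on (\<lambda>q. Transposition.transpose x a \<circ> q) A"
proof (rule inj_onI)
  fix q1 q2 assume "Transposition.transpose x a \<circ> q1 = Transposition.transpose x a \<circ> q2"
  then have "Transposition.transpose x a \<circ> (Transposition.transpose x a \<circ> q1)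
     = Transposition.transpose x a \<circ> (Transposition.transpose x a \<circ> q2)" by simp
  then show "q1 = q2" by (simp add: o_assoc)
qed

lemma decomp:
  assumes S: "finite S" and x: "x \<in> S"
  shows "(\<Sum>p\<in>PB S b. f p) = (\<Sum>p\<in>PB (S - {x}) b. f p)
     + (\<Sum>a\<in>S - {x}. \<Sum>q\<in>PB (S - {x}) (\<not> b). f (Transposition.transpose x a \<circ> q))"
proof -
  have fin: "finite (PB S b)" using finite_PB[OF S] .
  have split: "PB S b = {p \<in> PB S b. p x = x} \<union> {p \<in> PB S b. p x \<noteq> x}" by blast
  have "(\<Sum>p\<in>PB S b. f p) = (\<Sum>p\<in>{p \<in> PB S b. p x = x}. f p) + (\<Sum>p\<in>{p \<in> PB S b. p x \<noteq> x}. f p)"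
    by (subst split, rule sum.union_disjoint) (use fin in auto)
  also have "(\<Sum>p\<in>{p \<in> PB S b. p x = x}. f p) = (\<Sum>p\<in>PB (S - {x}) b. f p)"
    using PB_fix[OF x] by simp
  also have "(\<Sum>p\<in>{p \<in> PB S b. p x \<noteq> x}. f p)
      = (\<Sum>a\<in>S - {x}. \<Sum>p\<in>{p \<in> {p \<in> PB S b. p x \<noteq> x}. p x = a}. f p)"
  proof (rule sum.group[symmetric])
    show "finite {p \<in> PB S b. p x \<noteq> x}" using fin by auto
    show "finite (S - {x})" using S by auto
    show "(\<lambda>p. p x) ` {p \<in> PB S b. p x \<noteq> x} \<subseteq> S - {x}"
      unfolding PB_def using x by (auto simp: permutes_in_image)
  qed
  also have "\<dots> = (\<Sum>a\<in>S - {x}. \<Sum>q\<in>PB (S - {x}) (\<not> b). f (Transposition.transpose x a \<circ> q))"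
  proof (rule sum.cong[OF refl])
    fix a assume a: "a \<in> S - {x}"
    have "{p \<in> {p \<in> PB S b. p x \<noteq> x}. p x = a} = {p \<in> PB S b. p x = a}" using a by blast
    also have "\<dots> = (\<lambda>q. Transposition.transpose x a \<circ> q) ` PB (S - {x}) (\<not> b)"
      using PB_move[OF S x, of a b] a by blast
    finally have e: "{p \<in> {p \<in> PB S b. p x \<noteq> x}. p x = a} = (\<lambda>q. Transposition.transpose x a \<circ> q) ` PB (S - {x}) (\<not> b)" .
    show "(\<Sum>p\<in>{p \<in> {p \<in> PB S b. p x \<noteq> x}. p x = a}. f p)
        = (\<Sum>q\<in>PB (S - {x}) (\<not> b). f (Transposition.transpose x a \<circ> q))"
      unfolding e by (subst sum.reindex[OF inj_transpose_comp], rule sum.cong[OF refl], simp only: comp_apply)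
  qed
  finally show ?thesis .
qed


definition Phi :: "'a set \<Rightarrow> 'a \<Rightarrow> bool \<Rightarrow> nat" where
  "Phi S x b = (\<Sum>p\<in>PB S b. cl p x)"

definition Hs :: "'a set \<Rightarrow> 'a \<Rightarrow> bool \<Rightarrow> nat" where
  "Hs S x b = (\<Sum>a\<in>S - {x}. card (PB (S - {x}) (\<not> b)) + Phi (S - {x}) a (\<not> b))"

lemma sum_Suc_cl:
  assumes S: "finite S" "x \<in> S" "a \<in> S - {x}"
  shows "(\<Sum>q\<in>PB (S - {x}) c. cl (Transposition.transpose x a \<circ> q) x)
       = card (PB (S - {x}) c) + Phi (S - {x}) a c"
proof -
  have "(\<Sum>q\<in>PB (S - {x}) c. cl (Transposition.transpose x a \<circ> q) x)
      = (\<Sum>q\<in>PB (S - {x}) c. 1 + cl q a)"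
  proof (rule sum.cong[OF refl])
    fix q assume "q \<in> PB (S - {x}) c"
    then have q: "q permutes (S - {x})" unfolding PB_def by simp
    have qS: "q permutes S" "q x = x" using permutes_fix_iff[OF S(2), of q] q by simp_all
    show "cl (Transposition.transpose x a \<circ> q) x = 1 + cl q a"
      using cl_shift[OF S(1) qS(1) qS(2)] S(3) by simp
  qed
  also have "\<dots> = card (PB (S - {x}) c) + Phi (S - {x}) a c"
    by (subst sum.distrib) (simp add: Phi_def)
  finally show ?thesis .
qed

lemma card_rec:
  assumes S: "finite S" and x: "x \<in> S"
  shows "card (PB S b) = card (PB (S - {x}) b) + card (S - {x}) * card (PB (S - {x}) (\<not> b))"
  using decomp[OF S x, where b=b and f="\<lambda>_. 1::nat"] by simp

lemma Phi_rec:
  assumes S: "finite S" and x: "x \<in> S"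
  shows "Phi S x b = card (PB (S - {x}) b) + Hs S x b"
proof -
  have "Phi S x b = (\<Sum>p\<in>PB (S - {x}) b. cl p x)
     + (\<Sum>a\<in>S - {x}. \<Sum>q\<in>PB (S - {x}) (\<not> b). cl (Transposition.transpose x a \<circ> q) x)"
    unfolding Phi_def by (rule decomp[OF S x])
  also have "(\<Sum>p\<in>PB (S - {x}) b. cl p x) = card (PB (S - {x}) b)"
  proof -
    have "(\<Sum>p\<in>PB (S - {x}) b. cl p x) = (\<Sum>p\<in>PB (S - {x}) b. 1)"
    proof (rule sum.cong[OF refl])
      fix p assume "p \<in> PB (S - {x}) b"
      then have "p x = x" unfolding PB_def using permutes_not_in by fastforce
      then show "cl p x = 1" by (rule cl_fix)
    qed
    then show ?thesis by simp
  qed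
  also have "(\<Sum>a\<in>S - {x}. \<Sum>q\<in>PB (S - {x}) (\<not> b). cl (Transposition.transpose x a \<circ> q) x) = Hs S x b"
    unfolding Hs_def by (rule sum.cong[OF refl]) (rule sum_Suc_cl[OF S x])
  finally show ?thesis .
qed

lemma Hs_sum:
  assumes S: "finite S" and x: "x \<in> S"
  shows "(\<Sum>p\<in>PB S b. if p x = x then 0 else cl p x) = Hs S x b"
proof -
  have "(\<Sum>p\<in>PB S b. if p x = x then 0 else cl p x) = (\<Sum>p\<in>PB (S - {x}) b. if p x = x then 0 else cl p x)
     + (\<Sum>a\<in>S - {x}. \<Sum>q\<in>PB (S - {x}) (\<not> b). if (Transposition.transpose x a \<circ> q) x = x then 0 else cl (Transposition.transpose x a \<circ> q) x)"
    by (rule decomp[OF S x])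
  also have "(\<Sum>p\<in>PB (S - {x}) b. if p x = x then 0 else cl p x) = 0"
  proof (rule sum.neutral, rule ballI)
    fix p assume "p \<in> PB (S - {x}) b"
    then have "p x = x" unfolding PB_def using permutes_not_in by fastforce
    then show "(if p x = x then 0 else cl p x) = 0" by simp
  qed
  also have "(\<Sum>a\<in>S - {x}. \<Sum>q\<in>PB (S - {x}) (\<not> b). if (Transposition.transpose x a \<circ> q) x = x then 0 else cl (Transposition.transpose x a \<circ> q) x)
     = (\<Sum>a\<in>S - {x}. \<Sum>q\<in>PB (S - {x}) (\<not> b). cl (Transposition.transpose x a \<circ> q) x)"
  proof (rule sum.cong[OF refl], rule sum.cong[OF refl])
    fix a q assume a: "a \<in> S - {x}" and "q \<in> PB (S - {x}) (\<not> b)"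
    then have "q x = x" unfolding PB_def using permutes_not_in by fastforce
    then have "(Transposition.transpose x a \<circ> q) x = a" by simp
    then show "(if (Transposition.transpose x a \<circ> q) x = x then 0 else cl (Transposition.transpose x a \<circ> q) x)
       = cl (Transposition.transpose x a \<circ> q) x" using a by auto
  qed
  also have "\<dots> = Hs S x b"
    unfolding Hs_def by (rule sum.cong[OF refl]) (rule sum_Suc_cl[OF S x])
  finally show ?thesis by simp
qed


lemma PB_empty: "PB {} b = (if b then {id} else {})"
  unfolding PB_def by (auto simp: evenperm_id)

lemma card_PB:
  "finite S \<Longrightarrow> card S = k \<Longrightarrow>
     2 * card (PB S b) = (if k \<le> 1 then (if b then 2 else 0) else fact k)"
proof (induct k arbitrary: S b)
  case 0
  then have "S = {}" by simp
  then show ?case by (simp add: PB_empty)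
next
  case (Suc k)
  then obtain x where x: "x \<in> S" by (metis card.empty ex_in_conv nat.distinct(1))
  have S': "finite (S - {x})" "card (S - {x}) = k" using Suc.prems x by auto
  have IH: "\<And>c. 2 * card (PB (S - {x}) c) = (if k \<le> 1 then (if c then 2 else 0) else fact k)"
    using Suc.hyps[OF S'] by blast
  have r: "card (PB S b) = card (PB (S - {x}) b) + k * card (PB (S - {x}) (\<not> b))"
    using card_rec[OF Suc.prems(1) x, of b] S'(2) by simp
  consider "k = 0" | "k = 1" | "k \<ge> 2" by linarith
  then show ?case
  proof cases
    case 1 then show ?thesis using r IH[of b] by simp
  next
    case 2
    have "2 * card (PB S b) = 2 * card (PB (S - {x}) b) + 2 * card (PB (S - {x}) (\<not> b))"
      using r 2 by simp
    then show ?thesis using IH[of b] IH[of "\<not> b"] 2 by (cases b) simp_all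
  next
    case 3
    have "2 * card (PB S b) = 2 * card (PB (S - {x}) b) + k * (2 * card (PB (S - {x}) (\<not> b)))"
      using r by simp
    also have "\<dots> = fact k + k * fact k" using IH[of b] IH[of "\<not> b"] 3 by simp
    also have "\<dots> = fact (Suc k)" by simp
    finally show ?thesis using 3 by simp
  qed
qed

lemma card_PB2: "finite S \<Longrightarrow> card S \<ge> 2 \<Longrightarrow> 2 * card (PB S b) = fact (card S)"
  using card_PB[of S "card S" b] by simp

lemma Hs_pre:
  assumes S: "finite S" "card S = Suc k" "k \<ge> 1" "x \<in> S"
    and IH: "\<And>a c. a \<in> S - {x} \<Longrightarrow> fact k * (k + 1) \<le> 4 * Phi (S - {x}) a c + 2 * fact (k - 1)"
  shows "k * (4 * card (PB (S - {x}) (\<not> b)) + fact k * (k + 1)) \<le> 4 * Hs S x b + 2 * fact k"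
proof -
  have S': "finite (S - {x})" "card (S - {x}) = k" using S by auto
  have "of_nat (card (S - {x})) * (4 * card (PB (S - {x}) (\<not> b)) + fact k * (k + 1))
      \<le> (\<Sum>a\<in>S - {x}. 4 * card (PB (S - {x}) (\<not> b)) + 4 * Phi (S - {x}) a (\<not> b) + 2 * fact (k - 1))"
    by (rule sum_bounded_below) (use IH in force)
  then have "k * (4 * card (PB (S - {x}) (\<not> b)) + fact k * (k + 1))
      \<le> 4 * Hs S x b + k * (2 * fact (k - 1))"
    unfolding Hs_def using S'(2) by (simp add: sum.distrib sum_distrib_left algebra_simps)
  also have "k * (2 * fact (k - 1)) = 2 * fact k"
  proof -
    obtain k' where k': "k = Suc k'" using S(3) by (cases k) auto
    show ?thesis unfolding k' by (simp add: mult.commute mult.left_commute)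
  qed
  finally show ?thesis .
qed

lemma Phi_bound:
  "finite S \<Longrightarrow> card S = k \<Longrightarrow> k \<ge> 1 \<Longrightarrow> x \<in> S \<Longrightarrow>
     fact k * (k + 1) \<le> 4 * Phi S x b + 2 * fact (k - 1)"
proof (induct k arbitrary: S x b)
  case 0 then show ?case by linarith
next
  case (Suc k)
  show ?case
  proof (cases "k = 0")
    case True
    have "fact (Suc k) * (Suc k + 1) = (2::nat)" using True by simp
    moreover have "2 * fact (Suc k - 1) = (2::nat)" using True by simp
    ultimately show ?thesis by linarith
  next
    case False
    then have k1: "k \<ge> 1" by simp
    have S': "finite (S - {x})" "card (S - {x}) = k" using Suc.prems by auto
    have IH: "\<And>a c. a \<in> S - {x} \<Longrightarrow> fact k * (k + 1) \<le> 4 * Phi (S - {x}) a c + 2 * fact (k - 1)"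
      using Suc.hyps[OF S'] k1 by blast
    have H: "k * (4 * card (PB (S - {x}) (\<not> b)) + fact k * (k + 1)) \<le> 4 * Hs S x b + 2 * fact k"
      by (rule Hs_pre[OF Suc.prems(1,2) k1 Suc.prems(4) IH])
    have P: "Phi S x b = card (PB (S - {x}) b) + Hs S x b" by (rule Phi_rec[OF Suc.prems(1,4)])
    show ?thesis
    proof (cases "k = 1")
      case True
      have c: "2 * card (PB (S - {x}) b) + 2 * card (PB (S - {x}) (\<not> b)) = 2"
        using card_PB[OF S', of b] card_PB[OF S', of "\<not> b"] True by (cases b) simp_all
      have "4 * Phi S x b = 4 * card (PB (S - {x}) b) + 4 * Hs S x b" using P by simp
      moreover have "4 * card (PB (S - {x}) (\<not> b)) + 2 \<le> 4 * Hs S x b + 2"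
        using H True by simp
      ultimately have "4 \<le> 4 * Phi S x b" using c by linarith
      then show ?thesis using True by (simp add: numeral_eq_Suc)
    next
      case False
      then have k2: "k \<ge> 2" using k1 by simp
      have c: "2 * card (PB (S - {x}) c) = fact k" for c
        using card_PB2[OF S'(1)] S'(2) k2 by simp
      have fS: "fact (Suc k) = (k + 1) * fact k" by simp
      have alg: "(k + 1) * F * (Suc k + 1) = 2 * F + k * (2 * F + F * (k + 1))" for F :: nat
        by (simp add: algebra_simps)
      have "fact (Suc k) * (Suc k + 1) = 2 * fact k + k * (2 * fact k + fact k * (k + 1))"
        unfolding fS by (rule alg)
      also have "\<dots> \<le> 2 * fact k + 4 * Hs S x b + 2 * fact k"
      proof -
        have c4: "4 * card (PB (S - {x}) (\<not> b)) = 2 * fact k" using c[of "\<not> b"] by simp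
        from H have "k * (2 * fact k + fact k * (k + 1)) \<le> 4 * Hs S x b + 2 * fact k"
          by (subst (asm) c4)
        then show ?thesis by linarith
      qed
      also have "\<dots> = 4 * Phi S x b + 2 * fact (Suc k - 1)"
        using P c[of b] by simp
      finally show ?thesis .
    qed
  qed
qed

lemma Hs_bound:
  assumes S: "finite S" "card S = Suc k" "k \<ge> 2" "x \<in> S"
  shows "k * (2 * fact k + fact k * (k + 1)) \<le> 4 * Hs S x b + 2 * fact k"
proof -
  have S': "finite (S - {x})" "card (S - {x}) = k" using S by auto
  have IH: "\<And>a c. a \<in> S - {x} \<Longrightarrow> fact k * (k + 1) \<le> 4 * Phi (S - {x}) a c + 2 * fact (k - 1)"
    using Phi_bound[OF S'] S(3) by simp
  have c: "2 * card (PB (S - {x}) c) = fact k" for c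
    using card_PB2[OF S'(1)] S'(2) S(3) by simp
  have c4: "4 * card (PB (S - {x}) (\<not> b)) = 2 * fact k" using c[of "\<not> b"] by simp
  have h: "k * (4 * card (PB (S - {x}) (\<not> b)) + fact k * (k + 1)) \<le> 4 * Hs S x b + 2 * fact k"
    using Hs_pre[OF S(1,2) _ S(4) IH, of b] S(3) by simp
  from h show ?thesis by (subst (asm) c4)
qed


lemma alt_pow:
  assumes "p \<in> carrier (alt_group n)"
  shows "p [^]\<^bsub>alt_group n\<^esub> (k::nat) = p ^^ k"
proof -
  interpret A: group "alt_group n" by (rule alt_group_is_group)
  show ?thesis
  proof (induct k)
    case 0 then show ?case by (simp add: alt_group_one)
  next
    case (Suc k)
    have "p [^]\<^bsub>alt_group n\<^esub> Suc k = (p [^]\<^bsub>alt_group n\<^esub> k) \<otimes>\<^bsub>alt_group n\<^esub> p" by simp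
    also have "\<dots> = (p ^^ k) \<circ> p" using Suc by (simp add: alt_group_mult)
    also have "\<dots> = p ^^ Suc k" by (simp only: funpow_Suc_right)
    finally show ?case .
  qed
qed

lemma finite_alt: "finite (carrier (alt_group n))"
  by (rule finite_subset[OF _ finite_permutations[of "{1..n}"]]) (auto simp: alt_group_carrier)

lemma cl_le_ord:
  assumes p: "p \<in> carrier (alt_group n)"
  shows "cl p y \<le> group.ord (alt_group n) p"
proof -
  interpret A: group "alt_group n" by (rule alt_group_is_group)
  have "A.ord p \<ge> 1" by (rule A.ord_ge_1[OF finite_alt p])
  moreover have "p ^^ A.ord p = id"
    using A.pow_ord_eq_1[OF p] alt_pow[OF p] by (simp add: alt_group_one)
  ultimately show ?thesis by (intro cl_le) auto
qed


lemma carrier_alt_PB: "carrier (alt_group n) = PB {1..n} True"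
  unfolding PB_def by (auto simp: alt_group_carrier)

lemma psi_alt_ge:
  assumes n: "n \<ge> 3"
  shows "Hs {1..n} 1 True + Hs ({1..n} - {1}) 2 True \<le> psi (alt_group n)"
proof -
  let ?S = "{1..n::nat}"
  let ?S' = "{1..n::nat} - {1}"
  define h1 where "h1 p = (if p (1::nat) = 1 then 0 else cl p 1)" for p :: "nat \<Rightarrow> nat"
  define h2 where "h2 p = (if p (1::nat) = 1 then (if p 2 = 2 then 0 else cl p 2) else 0)" for p :: "nat \<Rightarrow> nat"
  have fin: "finite (PB ?S True)" by (rule finite_PB) simp
  have s1: "(\<Sum>p\<in>PB ?S True. h1 p) = Hs ?S 1 True"
    unfolding h1_def by (rule Hs_sum) (use n in auto)
  have "(\<Sum>p\<in>PB ?S True. h2 p) = (\<Sum>p\<in>{p \<in> PB ?S True. p 1 = 1}. (if p 2 = 2 then 0 else cl p 2))"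
    unfolding h2_def by (simp only: sum.inter_filter[OF fin])
  also have "\<dots> = (\<Sum>p\<in>PB ?S' True. (if p 2 = 2 then 0 else cl p 2))"
    using PB_fix[of 1 ?S True] n by simp
  also have "\<dots> = Hs ?S' 2 True"
    by (rule Hs_sum) (use n in auto)
  finally have s2: "(\<Sum>p\<in>PB ?S True. h2 p) = Hs ?S' 2 True" .
  have "(\<Sum>p\<in>PB ?S True. h1 p + h2 p) \<le> (\<Sum>p\<in>PB ?S True. group.ord (alt_group n) p)"
  proof (rule sum_mono)
    fix p assume p: "p \<in> PB ?S True"
    then have pc: "p \<in> carrier (alt_group n)" using carrier_alt_PB by simp
    show "h1 p + h2 p \<le> group.ord (alt_group n) p"
      unfolding h1_def h2_def using cl_le_ord[OF pc, of 1] cl_le_ord[OF pc, of 2] by auto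
  qed
  also have "\<dots> = psi (alt_group n)" unfolding psi_def carrier_alt_PB ..
  finally show ?thesis using s1 s2 by (simp add: sum.distrib)
qed


lemma poly_ineq:
  fixes j :: nat assumes "j \<ge> 4"
  shows "355 * (j + 2) * (j + 1) + 100 * (j + 2) \<le> 50 * ((j + 1) * (j + 1) * (j + 4) + j * (j + 3))"
proof -
  define i where "i = j - 4"
  have i: "j = i + 4" using assms by (simp add: i_def)
  show ?thesis unfolding i by (simp add: algebra_simps)
qed

lemma psi_alt_bound:
  assumes n: "n \<ge> 6"
  shows "355 * fact n \<le> 200 * psi (alt_group n)"
proof -
  define j where "j = n - 2"
  have j: "n = j + 2" using n by (simp add: j_def)
  have j4: "j \<ge> 4" using n j by simp
  define F :: nat where "F = fact j"
  have c1: "card {1..n} = Suc (j + 1)" using j by simp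
  have c2: "card ({1..n} - {1}) = Suc j" using j by simp
  have A: "(j + 1) * (2 * fact (j + 1) + fact (j + 1) * (j + 1 + 1)) \<le> 4 * Hs {1..n} 1 True + 2 * fact (j + 1)"
    by (rule Hs_bound[OF _ c1]) (use j4 j in auto)
  have B: "j * (2 * fact j + fact j * (j + 1)) \<le> 4 * Hs ({1..n} - {1}) 2 True + 2 * fact j"
    by (rule Hs_bound[OF _ c2]) (use j4 j in auto)
  have P: "Hs {1..n} 1 True + Hs ({1..n} - {1}) 2 True \<le> psi (alt_group n)"
    by (rule psi_alt_ge) (use n in simp)
  have fj1: "fact (j + 1) = (j + 1) * F" by (simp add: F_def)
  have fn: "fact n = (j + 2) * ((j + 1) * F)" using j by (simp add: F_def algebra_simps)
  have A': "(j + 1) * (2 * ((j + 1) * F) + ((j + 1) * F) * (j + 2)) \<le> 4 * Hs {1..n} 1 True + 2 * ((j + 1) * F)"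
    using A unfolding fj1 by simp
  have B': "j * (2 * F + F * (j + 1)) \<le> 4 * Hs ({1..n} - {1}) 2 True + 2 * F"
    using B unfolding F_def .
  have Q: "(355 * (j + 2) * (j + 1) + 100 * (j + 2)) * F \<le> 50 * ((j + 1) * (j + 1) * (j + 4) + j * (j + 3)) * F"
    using poly_ineq[OF j4] by (rule mult_right_mono) simp
  have e1: "(j + 1) * (2 * ((j + 1) * F) + ((j + 1) * F) * (j + 2)) = (j + 1) * (j + 1) * (j + 4) * F"
    by (simp add: algebra_simps)
  have e2: "j * (2 * F + F * (j + 1)) = j * (j + 3) * F" by (simp add: algebra_simps)
  have Q': "355 * ((j + 2) * ((j + 1) * F)) + 100 * ((j + 1) * F) + 100 * F
      \<le> 50 * ((j + 1) * (j + 1) * (j + 4) * F) + 50 * (j * (j + 3) * F)"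
    using Q by (simp add: algebra_simps)
  show ?thesis unfolding fn using Q' A' B' P unfolding e1 e2 by linarith
qed


lemma iso_ord:
  assumes G: "group G" and H: "group H" and f: "f \<in> iso G H" and x: "x \<in> carrier G"
  shows "group.ord H (f x) = group.ord G x"
proof -
  interpret G: group G by (rule G)
  interpret H: group H by (rule H)
  have hom: "f \<in> hom G H" using f unfolding iso_def by simp
  interpret fh: group_hom G H f by (rule group_hom.intro[OF G H]) (simp add: group_hom_axioms_def hom)
  have inj: "inj_on f (carrier G)" using f unfolding iso_def bij_betw_def by simp
  have fx: "f x \<in> carrier H" using x by simp
  have eq: "f (x [^]\<^bsub>G\<^esub> n) = \<one>\<^bsub>H\<^esub> \<longleftrightarrow> x [^]\<^bsub>G\<^esub> n = \<one>\<^bsub>G\<^esub>" for n :: nat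
  proof
    assume a: "f (x [^]\<^bsub>G\<^esub> n) = \<one>\<^bsub>H\<^esub>"
    have h: "f (x [^]\<^bsub>G\<^esub> n) = f \<one>\<^bsub>G\<^esub>" using a by simp
    show "x [^]\<^bsub>G\<^esub> n = \<one>\<^bsub>G\<^esub>" by (rule inj_onD[OF inj h]) (simp_all add: x)
  qed simp
  have "\<forall>n. f x [^]\<^bsub>H\<^esub> n = \<one>\<^bsub>H\<^esub> \<longleftrightarrow> G.ord x dvd n"
  proof
    fix n :: nat
    have "f x [^]\<^bsub>H\<^esub> n = f (x [^]\<^bsub>G\<^esub> n)" using x by (simp add: fh.hom_nat_pow)
    then show "f x [^]\<^bsub>H\<^esub> n = \<one>\<^bsub>H\<^esub> \<longleftrightarrow> G.ord x dvd n"
      using eq[of n] G.pow_eq_id[OF x] by simp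
  qed
  then show ?thesis using H.ord_unique[OF fx] by blast
qed

lemma psi_iso:
  assumes G: "group G" and H: "group H" and f: "f \<in> iso G H"
  shows "psi G = psi H" "order G = order H"
proof -
  have bij: "bij_betw f (carrier G) (carrier H)" using f unfolding iso_def by simp
  have "psi H = (\<Sum>x\<in>carrier G. group.ord H (f x))"
    unfolding psi_def by (rule sum.reindex_bij_betw[OF bij, symmetric])
  also have "\<dots> = psi G" unfolding psi_def
    by (rule sum.cong[OF refl]) (rule iso_ord[OF G H f])
  finally show "psi G = psi H" by simp
  show "order G = order H" unfolding order_def using bij by (rule bij_betw_same_card)
qed

theorem lemma4p1:
  fixes G :: "('a, 'b) monoid_scheme" and n :: nat
  assumes "group G"
    and "G \<cong> alt_group n"
    and "n \<ge> 5"
  shows "G \<cong> alt_group 5 \<or> avg_ord G \<ge> 3.55"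
proof (cases "n = 5")
  case True
  then show ?thesis using assms(2) by simp
next
  case False
  then have n: "n \<ge> 6" using assms(3) by simp
  obtain f where f: "f \<in> iso G (alt_group n)" using assms(2) unfolding is_iso_def by blast
  note e = psi_iso[OF assms(1) alt_group_is_group f]
  have o2: "2 * order (alt_group n) = fact n"
    unfolding order_def by (rule alt_group_card_carrier) (use n in simp)
  have b: "355 * fact n \<le> 200 * psi (alt_group n)" by (rule psi_alt_bound[OF n])
  have "355 * (2 * order (alt_group n)) \<le> 200 * psi (alt_group n)" using b o2 by simp
  then have r: "355 * real (order (alt_group n)) \<le> 100 * real (psi (alt_group n))" by linarith
  have pos: "real (order (alt_group n)) > 0" using o2 by (metis fact_gt_zero mult_0_right of_nat_0_less_iff gr0I)
  have "avg_ord G = real (psi (alt_group n)) / real (order (alt_group n))"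
    unfolding avg_ord_def e ..
  also have "\<dots> \<ge> 3.55" using r pos by (simp add: field_simps)
  finally show ?thesis by simp
qed

end
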